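(* Let $n$ be a positive integer. Every eigenvalue of the Fibonacci--Redheffer matrix $F_R(n)$ has geometric multiplicity $1$.
   Context: The Fibonacci numbers are $F_1=F_2=1$, $F_n=F_{n-1}+F_{n-2}$ for $n\ge 3$. The Fibonacci--Redheffer matrix $F_R(n)=[F_R(i,j)]_{i,j=1}^n$ is defined by $F_R(i,j)=1$ if $j=1$; $F_R(i,j)=F_i$ if $i\mid j$; and $F_R(i,j)=0$ otherwise. The geometric multiplicity of an eigenvalue $\lambda$ is the dimension of the null space of $F_R(n)-\lambda I_n$. *)

theory Defs
  imports "Jordan_Normal_Form.Matrix_Kernel" "Jordan_Normal_Form.Char_Poly" "HOL-Number_Theory.Fib"
begin

text \<open>Matrix indices in Jordan_Normal_Form are
  0-based, so the entry (i,j) here is the paper's entry (i+1, j+1).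
  Paper: F_R(i,j) = 1 if j = 1; F_i if i divides j; 0 otherwise.
  fib from HOL-Number_Theory satisfies fib 1 = fib 2 = 1.\<close>
definition fib_redheffer :: "nat \<Rightarrow> complex mat" where
  "fib_redheffer n = mat n n (\<lambda>(i, j).
     if j + 1 = 1 then 1
     else if (i + 1) dvd (j + 1) then of_nat (fib (i + 1))
     else 0)"

definition geom_mult :: "complex mat \<Rightarrow> complex \<Rightarrow> nat" where
  "geom_mult A ev = kernel_dim (A - ev \<cdot>\<^sub>m 1\<^sub>m (dim_row A))"

end

theory Submission
  imports Defs
begin


lemma fib_strict: "2 \<le> a \<Longrightarrow> a < b \<Longrightarrow> fib a < fib b"
proof (induction b)
  case 0 then show ?case by simp
next
  case (Suc b)
  show ?case
  proof (cases "a = b")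
    case True
    define m where "m = b - 2"
    have m: "b = Suc (Suc m)" using Suc.prems True unfolding m_def by simp
    have "fib (Suc b) = fib (Suc (Suc m)) + fib (Suc m)" using m fib_plus_2[of "Suc m"] by simp
    moreover have "fib (Suc m) > 0" by (simp add: fib_neq_0_nat)
    ultimately show ?thesis using True m by simp
  next
    case False
    then have "fib a < fib b" using Suc by simp
    then show ?thesis using fib_Suc_mono[of b] by simp
  qed
qed

lemma core:
  fixes x :: "nat \<Rightarrow> complex" and n :: nat and ev :: complex
  assumes eq: "\<And>i. i < n \<Longrightarrow> x 0 + of_nat (fib (i+1)) * (\<Sum>j\<in>{j\<in>{1..<n}. (i+1) dvd (j+1)}. x j) = ev * x i"
    and x0: "x 0 = 0"
  shows "\<forall>i<n. x i = 0"
proof (cases "n = 0")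
  case True then show ?thesis by simp
next
  case False
  define T where "T i = (\<Sum>j\<in>{j\<in>{i<..<n}. (i+1) dvd (j+1)}. x j)" for i
  have eqi: "of_nat (fib (i+1)) * (x i + T i) = ev * x i" if "1 \<le> i" "i < n" for i
  proof -
    have "{j\<in>{1..<n}. (i+1) dvd (j+1)} = insert i {j\<in>{i<..<n}. (i+1) dvd (j+1)}"
    proof (intro Set.set_eqI iffI)
      fix j assume j: "j \<in> {j\<in>{1..<n}. (i+1) dvd (j+1)}"
      then have "i + 1 \<le> j + 1" by (intro dvd_imp_le) auto
      then show "j \<in> insert i {j\<in>{i<..<n}. (i+1) dvd (j+1)}" using j by auto
    next
      fix j assume "j \<in> insert i {j\<in>{i<..<n}. (i+1) dvd (j+1)}"
      then show "j \<in> {j\<in>{1..<n}. (i+1) dvd (j+1)}" using that by auto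
    qed
    then have "(\<Sum>j\<in>{j\<in>{1..<n}. (i+1) dvd (j+1)}. x j) = x i + T i"
      unfolding T_def by (simp add: sum.insert)
    then show ?thesis using eq[OF that(2)] x0 by simp
  qed
  have sum0: "(\<Sum>j\<in>{1..<n}. x j) = 0"
  proof -
    have "{j\<in>{1..<n}. (0+1) dvd (j+1)} = {1..<n}" by auto
    then show ?thesis using eq[of 0] False x0 by simp
  qed
  show ?thesis
  proof (cases "\<exists>i0\<in>{1..<n}. ev = of_nat (fib (i0+1))")
    case False
    have "\<forall>i. 1 \<le> i \<and> i < n \<longrightarrow> x i = 0" 
    proof (intro allI)
      fix i
      show "1 \<le> i \<and> i < n \<longrightarrow> x i = 0"
      proof (induction "n - i" arbitrary: i rule: less_induct)
        case less
        show ?case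
        proof
          assume i: "1 \<le> i \<and> i < n"
          have "T i = 0" unfolding T_def
            by (rule sum.neutral) (use less i in auto)
          then have "(of_nat (fib (i+1)) - ev) * x i = 0" using eqi[of i] i
            by (simp add: algebra_simps)
          moreover have "of_nat (fib (i+1)) - ev \<noteq> 0" using False i by auto
          ultimately show "x i = 0" by simp
        qed
      qed
    qed
    then have *: "\<And>i. 1 \<le> i \<Longrightarrow> i < n \<Longrightarrow> x i = 0" by blast
    show ?thesis
    proof (intro allI impI)
      fix i assume "i < n"
      then show "x i = 0" using * x0 by (cases "i = 0") auto
    qed
  next
    case True
    then obtain i0 where i0: "1 \<le> i0" "i0 < n" "ev = of_nat (fib (i0+1))" by auto
    define z where "z = x i0"
    have claim: "\<forall>i. 1 \<le> i \<and> i < n \<longrightarrow> (\<exists>r\<ge>0. x i = complex_of_real r * z \<and> (i0 < i \<longrightarrow> r = 0) \<and> (i = i0 \<longrightarrow> r = 1))"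
    proof (intro allI)
      fix i
      show "1 \<le> i \<and> i < n \<longrightarrow> (\<exists>r\<ge>0. x i = complex_of_real r * z \<and> (i0 < i \<longrightarrow> r = 0) \<and> (i = i0 \<longrightarrow> r = 1))"
      proof (induction "n - i" arbitrary: i rule: less_induct)
        case less
        show ?case
        proof
          assume i: "1 \<le> i \<and> i < n"
          let ?J = "{j\<in>{i<..<n}. (i+1) dvd (j+1)}"
          have "\<forall>j\<in>?J. \<exists>r\<ge>0. x j = complex_of_real r * z \<and> (i0 < j \<longrightarrow> r = 0) \<and> (j = i0 \<longrightarrow> r = 1)"
            using less i by auto
          from bchoice[OF this] obtain r where r': "\<forall>j\<in>?J. r j \<ge> 0 \<and> x j = complex_of_real (r j) * z \<and> (i0 < j \<longrightarrow> r j = 0) \<and> (j = i0 \<longrightarrow> r j = 1)"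
            by blast
          have rnn: "\<And>j. j \<in> ?J \<Longrightarrow> r j \<ge> 0" using r' by blast
          have rx: "\<And>j. j \<in> ?J \<Longrightarrow> x j = complex_of_real (r j) * z" using r' by blast
          have rz: "\<And>j. j \<in> ?J \<Longrightarrow> i0 < j \<Longrightarrow> r j = 0" using r' by blast
          define R where "R = (\<Sum>j\<in>?J. r j)"
          have R0: "R \<ge> 0" unfolding R_def using rnn by (intro sum_nonneg) blast
          have "T i = (\<Sum>j\<in>?J. complex_of_real (r j) * z)"
            unfolding T_def by (rule sum.cong[OF refl]) (rule rx)
          also have "\<dots> = complex_of_real R * z"
            unfolding R_def of_real_sum sum_distrib_right ..
          finally have TR: "T i = complex_of_real R * z" .
          have Rz: "R = 0" if "i0 \<le> i"
            unfolding R_def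
          proof (rule sum.neutral, rule ballI)
            fix j assume j: "j \<in> ?J"
            then have "i0 < j" using that by simp
            then show "r j = 0" using rz[OF j] by simp
          qed
          have eqc: "complex_of_nat (fib (i+1)) * (x i + complex_of_real R * z) = ev * x i"
            using eqi[of i] i TR by simp
          consider "i0 < i" | "i = i0" | "i < i0" by linarith
          then show "\<exists>r\<ge>0. x i = complex_of_real r * z \<and> (i0 < i \<longrightarrow> r = 0) \<and> (i = i0 \<longrightarrow> r = 1)"
          proof cases
            case 1
            then have "R = 0" using Rz by simp
            then have "complex_of_nat (fib (i+1)) * x i = ev * x i" using eqc by simp
            then have "(complex_of_nat (fib (i+1)) - ev) * x i = 0"
              by (simp add: left_diff_distrib)
            moreover have "fib (i0+1) < fib (i+1)" using 1 i0 by (intro fib_strict) auto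
            then have "complex_of_nat (fib (i+1)) - ev \<noteq> 0" using i0 by auto
            ultimately have "x i = 0" by simp
            then show ?thesis using 1 by (intro exI[of _ 0]) auto
          next
            case 2
            then show ?thesis unfolding z_def by (intro exI[of _ 1]) auto
          next
            case 3
            define f where "f = real (fib (i+1))"
            define e where "e = real (fib (i0+1))"
            have fe: "f < e" unfolding f_def e_def using 3 i by (simp add: fib_strict)
            have f0: "f \<ge> 0" unfolding f_def by simp
            have cf: "complex_of_nat (fib (i+1)) = complex_of_real f" unfolding f_def by simp
            have ce: "ev = complex_of_real e" unfolding e_def using i0 by simp
            have "complex_of_real f * (x i + complex_of_real R * z) = complex_of_real e * x i"
              using eqc unfolding cf ce .
            then have "complex_of_real f * x i + complex_of_real (f * R) * z = complex_of_real e * x i"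
              by (simp add: distrib_left mult.assoc)
            then have "complex_of_real (f * R) * z = complex_of_real e * x i - complex_of_real f * x i"
              by (simp add: eq_diff_eq add.commute)
            also have "\<dots> = complex_of_real (e - f) * x i" by (simp add: left_diff_distrib)
            finally have eq3: "complex_of_real (e - f) * x i = complex_of_real (f * R) * z" by simp
            have ne: "complex_of_real (e - f) \<noteq> 0" using fe by simp
            have "x i = inverse (complex_of_real (e - f)) * (complex_of_real (e - f) * x i)"
              using ne by simp
            also have "\<dots> = inverse (complex_of_real (e - f)) * complex_of_real (f * R) * z"
              unfolding eq3 by (simp add: mult.assoc)
            also have "\<dots> = complex_of_real (f * R / (e - f)) * z"
              by (simp add: divide_inverse of_real_inverse mult.commute)
            finally have "x i = complex_of_real (f * R / (e - f)) * z" .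
            moreover have "f * R / (e - f) \<ge> 0" using fe f0 R0 by simp
            ultimately show ?thesis using 3 by (intro exI[of _ "f * R / (e - f)"]) auto
          qed
        qed
      qed
    qed
    then have "\<forall>i\<in>{1..<n}. \<exists>r\<ge>0. x i = complex_of_real r * z \<and> (i0 < i \<longrightarrow> r = 0) \<and> (i = i0 \<longrightarrow> r = 1)"
      by simp
    from bchoice[OF this] obtain r where r': "\<forall>i\<in>{1..<n}. r i \<ge> 0 \<and> x i = complex_of_real (r i) * z \<and> (i0 < i \<longrightarrow> r i = 0) \<and> (i = i0 \<longrightarrow> r i = 1)"
      by blast
    have r: "\<And>i. i \<in> {1..<n} \<Longrightarrow> r i \<ge> 0 \<and> x i = complex_of_real (r i) * z \<and> (i = i0 \<longrightarrow> r i = 1)"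
      using r' by blast
    have "(\<Sum>j\<in>{1..<n}. x j) = complex_of_real (\<Sum>j\<in>{1..<n}. r j) * z"
      unfolding of_real_sum sum_distrib_right by (rule sum.cong[OF refl]) (use r in blast)
    moreover have "(\<Sum>j\<in>{1..<n}. r j) \<ge> r i0"
      by (rule member_le_sum) (use r i0 in auto)
    then have "(\<Sum>j\<in>{1..<n}. r j) \<noteq> 0" using r i0 by auto
    ultimately have "complex_of_real (\<Sum>j\<in>{1..<n}. r j) * z = 0" "(\<Sum>j\<in>{1..<n}. r j) \<noteq> 0"
      using sum0 by argo+
    then have "z = 0" by (metis mult_eq_0_iff of_real_eq_0_iff)
    show ?thesis
    proof (intro allI impI)
      fix i assume "i < n"
      show "x i = 0"
      proof (cases "i = 0")
        case True then show ?thesis using x0 by simp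
      next
        case False then show ?thesis using r[of i] \<open>i < n\<close> \<open>z = 0\<close> by simp
      qed
    qed
  qed
qed



lemma row_eq:
  fixes x :: "complex vec"
  assumes x: "x \<in> carrier_vec n" and i: "i < n"
  shows "((fib_redheffer n - ev \<cdot>\<^sub>m 1\<^sub>m n) *\<^sub>v x) $ i
     = x $ 0 + of_nat (fib (i+1)) * (\<Sum>j\<in>{j\<in>{1..<n}. (i+1) dvd (j+1)}. x $ j) - ev * x $ i"
proof -
  let ?M = "fib_redheffer n - ev \<cdot>\<^sub>m 1\<^sub>m n"
  define a where "a j = (if j + 1 = 1 then 1 else if (i+1) dvd (j+1) then complex_of_nat (fib (i+1)) else 0)" for j
  have dims: "dim_row ?M = n" "dim_col ?M = n" by simp_all
  have ent: "?M $$ (i,j) = a j - (if i = j then ev else 0)" if "j < n" for j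
    using i that unfolding fib_redheffer_def a_def by simp
  have "(?M *\<^sub>v x) $ i = (\<Sum>j\<in>{0..<n}. row ?M i $ j * x $ j)"
    using i x dims by (simp add: scalar_prod_def)
  also have "\<dots> = (\<Sum>j\<in>{0..<n}. (a j - (if i = j then ev else 0)) * x $ j)"
    by (rule sum.cong[OF refl]) (use dims ent i in simp)
  also have "\<dots> = (\<Sum>j\<in>{0..<n}. a j * x $ j) - (\<Sum>j\<in>{0..<n}. (if i = j then ev else 0) * x $ j)"
    by (simp only: left_diff_distrib sum_subtractf)
  also have "(\<Sum>j\<in>{0..<n}. (if i = j then ev else 0) * x $ j) = (\<Sum>j\<in>{0..<n}. (if i = j then ev * x $ i else 0))"
    by (rule sum.cong[OF refl]) auto
  also have "\<dots> = ev * x $ i"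
    using i by simp
  also have "{0..<n} = insert 0 {1..<n}" using i by auto
  also have "(\<Sum>j\<in>insert 0 {1..<n}. a j * x $ j) = x $ 0 + (\<Sum>j\<in>{1..<n}. a j * x $ j)"
    by (simp add: a_def)
  also have "(\<Sum>j\<in>{1..<n}. a j * x $ j) = (\<Sum>j\<in>{1..<n}. if (i+1) dvd (j+1) then of_nat (fib (i+1)) * x $ j else 0)"
    by (rule sum.cong[OF refl]) (auto simp: a_def)
  also have "\<dots> = (\<Sum>j\<in>{j\<in>{1..<n}. (i+1) dvd (j+1)}. of_nat (fib (i+1)) * x $ j)"
    by (simp only: sum.inter_filter[OF finite_atLeastLessThan])
  also have "\<dots> = of_nat (fib (i+1)) * (\<Sum>j\<in>{j\<in>{1..<n}. (i+1) dvd (j+1)}. x $ j)"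
    by (simp add: sum_distrib_left)
  finally show ?thesis .
qed

theorem lemma3:
  fixes n :: nat and ev :: complex
  assumes "n \<ge> 1"
    and "eigenvalue (fib_redheffer n) ev"
  shows "geom_mult (fib_redheffer n) ev = 1"
proof -
  let ?A = "fib_redheffer n"
  let ?B = "?A - ev \<cdot>\<^sub>m 1\<^sub>m n"
  have A: "?A \<in> carrier_mat n n" by (simp add: fib_redheffer_def)
  have B: "?B \<in> carrier_mat n n" by (rule minus_carrier_mat) simp
  from assms(2) obtain v where v: "v \<in> carrier_vec n" "v \<noteq> 0\<^sub>v n" "?A *\<^sub>v v = ev \<cdot>\<^sub>v v"
    unfolding eigenvalue_def eigenvector_def using A by auto
  interpret K: kernel n n ?B by unfold_locales (rule B)
  have gm: "geom_mult ?A ev = K.dim" unfolding geom_mult_def using A K.kernel_dim by simp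
  have Aeq: "(?A *\<^sub>v w) $ i = (?B *\<^sub>v w) $ i + ev * w $ i" if "w \<in> carrier_vec n" "i < n" for w i
  proof -
    have "?B *\<^sub>v w = ?A *\<^sub>v w - (ev \<cdot>\<^sub>m 1\<^sub>m n) *\<^sub>v w"
      using A that by (intro minus_mult_distrib_mat_vec) auto
    then have "(?B *\<^sub>v w) $ i = (?A *\<^sub>v w) $ i - ((ev \<cdot>\<^sub>m 1\<^sub>m n) *\<^sub>v w) $ i"
      using A that by simp
    moreover have "((ev \<cdot>\<^sub>m 1\<^sub>m n) *\<^sub>v w) $ i = ev * w $ i"
    proof -
      have "((ev \<cdot>\<^sub>m 1\<^sub>m n) *\<^sub>v w) $ i = (\<Sum>j\<in>{0..<n}. ev * (if j = i then 1 else 0) * w $ j)"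
        using that by (simp add: scalar_prod_def)
      also have "\<dots> = (\<Sum>j\<in>{0..<n}. (if j = i then ev * w $ i else 0))"
        by (rule sum.cong[OF refl]) auto
      finally show ?thesis using that by simp
    qed
    ultimately show ?thesis by simp
  qed
  have vk: "v \<in> mat_kernel ?B"
  proof (rule mat_kernelI[OF B v(1)])
    show "?B *\<^sub>v v = 0\<^sub>v n"
    proof (rule eq_vecI)
      fix i assume "i < dim_vec (0\<^sub>v n :: complex vec)"
      then have i: "i < n" by simp
      have "(?A *\<^sub>v v) $ i = ev * v $ i" using v(3) v(1) i by simp
      then show "(?B *\<^sub>v v) $ i = 0\<^sub>v n $ i" using Aeq[OF v(1) i] i by simp
    qed (use B in simp)
  qed
  have inj: "w = 0\<^sub>v n" if w: "w \<in> mat_kernel ?B" "w $ 0 = 0" for w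
  proof -
    have wc: "w \<in> carrier_vec n" and wk: "?B *\<^sub>v w = 0\<^sub>v n" using mat_kernelD[OF B w(1)] by auto
    have "\<forall>i<n. w $ i = 0"
    proof (rule core[where x = "\<lambda>j. w $ j" and ev = ev])
      fix i assume i: "i < n"
      have "(?B *\<^sub>v w) $ i = 0" using wk i by simp
      then show "w $ 0 + of_nat (fib (i+1)) * (\<Sum>j\<in>{j\<in>{1..<n}. (i+1) dvd (j+1)}. w $ j) = ev * w $ i"
        using row_eq[OF wc i, of ev] by simp
    qed (rule w(2))
    then show ?thesis using wc by (intro eq_vecI) auto
  qed
  have v0: "v $ 0 \<noteq> 0" using inj[OF vk] v(2) by blast
  have span: "K.span {v} = mat_kernel ?B"
  proof
    show "K.span {v} \<subseteq> mat_kernel ?B" using vk by (intro K.Ker.span_is_subset2) auto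
  next
    show "mat_kernel ?B \<subseteq> K.span {v}"
    proof
      fix w assume w: "w \<in> mat_kernel ?B"
      define c where "c = w $ 0 / v $ 0"
      have wc: "w \<in> carrier_vec n" using mat_kernelD[OF B w] by auto
      have "w - c \<cdot>\<^sub>v v \<in> mat_kernel ?B"
      proof (rule mat_kernelI[OF B])
        show "w - c \<cdot>\<^sub>v v \<in> carrier_vec n" using wc v(1) by simp
        have Bw: "?B *\<^sub>v w = 0\<^sub>v n" using mat_kernelD[OF B w] by simp
        have Bv: "?B *\<^sub>v v = 0\<^sub>v n" using mat_kernelD[OF B vk] by simp
        have "?B *\<^sub>v (w - c \<cdot>\<^sub>v v) = ?B *\<^sub>v w - ?B *\<^sub>v (c \<cdot>\<^sub>v v)"
          using wc v(1) B by (intro mult_minus_distrib_mat_vec) auto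
        also have "?B *\<^sub>v (c \<cdot>\<^sub>v v) = c \<cdot>\<^sub>v (?B *\<^sub>v v)"
          using v(1) B by (intro mult_mat_vec) auto
        finally show "?B *\<^sub>v (w - c \<cdot>\<^sub>v v) = 0\<^sub>v n" unfolding Bw Bv by auto
      qed
      moreover have "(w - c \<cdot>\<^sub>v v) $ 0 = 0" using wc v(1) v0 assms(1) unfolding c_def by simp
      ultimately have "w - c \<cdot>\<^sub>v v = 0\<^sub>v n" by (rule inj)
      have wcv: "w = c \<cdot>\<^sub>v v"
      proof (rule eq_vecI)
        fix i assume "i < dim_vec (c \<cdot>\<^sub>v v)"
        then have i: "i < n" using v(1) by simp
        have "(w - c \<cdot>\<^sub>v v) $ i = 0\<^sub>v n $ i" using \<open>w - c \<cdot>\<^sub>v v = 0\<^sub>v n\<close> by simp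
        then show "w $ i = (c \<cdot>\<^sub>v v) $ i" using wc v(1) i by simp
      qed (use wc v(1) in simp)
      have "v \<in> K.NC.span {v}" using K.NC.in_own_span[of "{v}"] v(1) by auto
      then have "c \<cdot>\<^sub>v v \<in> K.NC.span {v}" using v(1) by (intro K.NC.smult_in_span) auto
      then show "w \<in> K.span {v}" using K.span_same[of "{v}"] vk wcv by auto
    qed
  qed
  have le: "K.dim \<le> 1"
    using K.Ker.gen_ge_dim[of "{v}"] span vk by simp
  have li: "\<not> K.Ker.lin_dep {v}"
  proof
    assume "K.Ker.lin_dep {v}"
    then obtain S a u where S: "finite S" "S \<subseteq> {v}" "K.lincomb a S = 0\<^sub>v n" "u \<in> S" "a u \<noteq> 0"
      unfolding K.Ker.lin_dep_def by auto
    then have Sv: "S = {v}" "u = v" by auto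
    have n0: "0 < n" using assms(1) by simp
    have "K.lincomb a {v} $ 0 = a v * v $ 0" using K.lincomb_index[OF n0, of "{v}" a] vk by simp
    then have "a v * v $ 0 = 0" using S(3) Sv n0 by simp
    then show False using v0 S(5) Sv by simp
  qed
  have fd: "K.Ker.fin_dim" unfolding K.Ker.fin_dim_def
    by (rule exI[of _ "{v}"]) (use span vk in auto)
  have ge: "1 \<le> K.dim"
    using K.Ker.li_le_dim(2)[OF fd _ li] vk by simp
  show ?thesis using gm le ge by simp
qed

end
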